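(* The theory whose axioms are Extensionality, Separation, and the Hierarchy axiom $\forall a\exists h\forall k\big(k\subseteq h\to\exists s(s=\mathrm{pot}(k)\wedge(s\in h\vee a\subseteq s))\big)$ proves $\mathsf{LT}$ (equivalently, proves Stratification: every set is a subset of some level).
   Context: Second-order logic with Comprehension, single primitive $\in$. Extensionality: $\forall a\forall b(\forall x(x\in a\leftrightarrow x\in b)\to a=b)$. Separation: $\forall F\forall a\exists b\forall x(x\in b\leftrightarrow(F(x)\wedge x\in a))$. Potentiation $\mathrm{pot}(a)=\{x:\exists c(x\subseteq c\wedge c\in a)\}$. A history is $h$ with $x=\mathrm{pot}(x\cap h)$ for all $x\in h$; a level is $\mathrm{pot}(h)$ for a history $h$. $\mathsf{LT}$ has axioms Extensionality, Separation and Stratification. *)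

theory Defs
  imports Main
begin

text \<open>A model of the language with single primitive membership: a type 'a of objects
and a relation m, where m x y means x is a member of y. Second-order quantifiers
range over predicates 'a \<Rightarrow> bool (full comprehension).\<close>

definition subs :: "('a \<Rightarrow> 'a \<Rightarrow> bool) \<Rightarrow> 'a \<Rightarrow> 'a \<Rightarrow> bool" where
  "subs m x y \<longleftrightarrow> (\<forall>z. m z x \<longrightarrow> m z y)"

definition is_pot :: "('a \<Rightarrow> 'a \<Rightarrow> bool) \<Rightarrow> 'a \<Rightarrow> 'a \<Rightarrow> bool" where
  "is_pot m s a \<longleftrightarrow> (\<forall>x. m x s \<longleftrightarrow> (\<exists>c. subs m x c \<and> m c a))"

text \<open>h is a history: x = pot(x \<inter> h) for all x \<in> h.\<close>
definition is_history :: "('a \<Rightarrow> 'a \<Rightarrow> bool) \<Rightarrow> 'a \<Rightarrow> bool" where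
  "is_history m h \<longleftrightarrow>
     (\<forall>x. m x h \<longrightarrow> (\<forall>y. m y x \<longleftrightarrow> (\<exists>c. subs m y c \<and> m c x \<and> m c h)))"

definition is_level :: "('a \<Rightarrow> 'a \<Rightarrow> bool) \<Rightarrow> 'a \<Rightarrow> bool" where
  "is_level m l \<longleftrightarrow> (\<exists>h. is_history m h \<and> is_pot m l h)"

definition Extensionality :: "('a \<Rightarrow> 'a \<Rightarrow> bool) \<Rightarrow> bool" where
  "Extensionality m \<longleftrightarrow> (\<forall>a b. (\<forall>x. m x a \<longleftrightarrow> m x b) \<longrightarrow> a = b)"

definition Separation :: "('a \<Rightarrow> 'a \<Rightarrow> bool) \<Rightarrow> bool" where
  "Separation m \<longleftrightarrow> (\<forall>F a. \<exists>b. \<forall>x. m x b \<longleftrightarrow> (F x \<and> m x a))"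

definition Hierarchy :: "('a \<Rightarrow> 'a \<Rightarrow> bool) \<Rightarrow> bool" where
  "Hierarchy m \<longleftrightarrow>
     (\<forall>a. \<exists>h. \<forall>k. subs m k h \<longrightarrow> (\<exists>s. is_pot m s k \<and> (m s h \<or> subs m a s)))"

definition Stratification :: "('a \<Rightarrow> 'a \<Rightarrow> bool) \<Rightarrow> bool" where
  "Stratification m \<longleftrightarrow> (\<forall>a. \<exists>l. is_level m l \<and> subs m a l)"

definition LT :: "('a \<Rightarrow> 'a \<Rightarrow> bool) \<Rightarrow> bool" where
  "LT m \<longleftrightarrow> Extensionality m \<and> Separation m \<and> Stratification m"

end

theory Submission
  imports Defs
begin

inductive HH :: "('a \<Rightarrow> 'a \<Rightarrow> bool) \<Rightarrow> 'a \<Rightarrow> 'a \<Rightarrow> bool" for m h where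
  step: "m x h \<Longrightarrow> (\<forall>c. m c k \<longrightarrow> HH m h c) \<Longrightarrow> is_pot m x k \<Longrightarrow> HH m h x"

lemma HH_irrefl: "HH m h x \<Longrightarrow> \<not> m x x"
proof (induction rule: HH.induct)
  case (step x k)
  show ?case
  proof
    assume "m x x"
    then obtain c where c: "subs m x c" "m c k" using step unfolding is_pot_def by blast
    have "m c x" using step c(2) unfolding is_pot_def subs_def by blast
    then have "m c c" using c(1) unfolding subs_def by blast
    then show False using step c(2) by blast
  qed
qed

lemma HH_mem: "HH m h x \<Longrightarrow> m x h"
  by (induction rule: HH.induct) auto

lemma strat:
  assumes S: "Separation m" and Hi: "Hierarchy m"
  shows "\<exists>l. is_level m l \<and> subs m a l"
proof -
  obtain h where h: "\<And>k. subs m k h \<Longrightarrow> (\<exists>s. is_pot m s k \<and> (m s h \<or> subs m a s))"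
    using Hi unfolding Hierarchy_def by blast
  obtain h' where h': "\<And>x. m x h' \<longleftrightarrow> (HH m h x \<and> m x h)"
    using S unfolding Separation_def by (erule_tac x="HH m h" in allE, erule_tac x=h in allE, blast)
  have h'H: "\<And>x. m x h' \<longleftrightarrow> HH m h x" using h' HH_mem by metis
  have hist: "is_history m h'"
    unfolding is_history_def
  proof (intro allI impI)
    fix x y assume "m x h'"
    then have "HH m h x" using h'H by blast
    then obtain k where k: "\<forall>c. m c k \<longrightarrow> HH m h c" "is_pot m x k"
      by (cases rule: HH.cases) auto
    show "m y x \<longleftrightarrow> (\<exists>c. subs m y c \<and> m c x \<and> m c h')"
    proof
      assume "m y x"
      then obtain c where c: "subs m y c" "m c k" using k(2) unfolding is_pot_def by blast
      have "m c x" using k(2) c(2) unfolding is_pot_def subs_def by blast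
      then show "\<exists>c. subs m y c \<and> m c x \<and> m c h'" using c k(1) h'H by blast
    next
      assume "\<exists>c. subs m y c \<and> m c x \<and> m c h'"
      then obtain c where c: "subs m y c" "m c x" by blast
      then obtain c' where "subs m c c'" "m c' k" using k(2) unfolding is_pot_def by blast
      then show "m y x" using c k(2) unfolding is_pot_def subs_def by blast
    qed
  qed
  have "subs m h' h" using h' unfolding subs_def by blast
  then obtain s where s: "is_pot m s h'" "m s h \<or> subs m a s" using h by blast
  show ?thesis
  proof (cases "m s h")
    case True
    have "HH m h s" using HH.step[OF True _ s(1)] h'H by blast
    then have "m s h'" using h'H by blast
    moreover have "subs m s s" unfolding subs_def by simp
    moreover have "m s s \<longleftrightarrow> (\<exists>c. subs m s c \<and> m c h')" using s(1) unfolding is_pot_def by (rule spec)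
    ultimately have "m s s" by blast
    then have False using HH_irrefl[OF \<open>HH m h s\<close>] by simp
    then show ?thesis by (rule FalseE)
  next
    case False
    then have "subs m a s" using s(2) by simp
    moreover have "is_level m s" unfolding is_level_def using s(1) hist by blast
    ultimately show ?thesis by blast
  qed
qed

theorem proposition32:
  fixes m :: "'a \<Rightarrow> 'a \<Rightarrow> bool"
  assumes "Extensionality m" and "Separation m" and "Hierarchy m"
  shows "LT m"
  using assms strat[OF assms(2,3)] unfolding LT_def Stratification_def by blast

end
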